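(* Let $n\ge2$, $s\in[1/2,1)$ and $\sigma>0$. There exists $\delta>0$, depending on $\sigma$, $n$ and $s$, such that the following holds. Let $Q\subset\mathbb{R}^n$ be a cube and let $A,D$ be disjoint measurable subsets of $Q$ with $\min\{|A|,|D|\}\ge\sigma|Q|$, and let $B:=Q\setminus(A\cup D)$. Then $$L(A,D)\ge\begin{cases}\delta\,|Q|^{(n-1)/n}\log(|Q|/|B|) & \text{if } s=1/2,\\ \delta\,|Q|^{(n-2s)/n}\,(|Q|/|B|)^{2s-1} & \text{if } s\in(1/2,1).\end{cases}$$
   Context: For measurable $A,D\subset\mathbb{R}^n$, $L(A,D):=\int_A\int_D\frac{dx\,dy}{|x-y|^{n+2s}}$; $|\cdot|$ is Lebesgue measure. *)

theory Defs
  imports "HOL-Analysis.Analysis"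
begin

definition Lint :: "real \<Rightarrow> (real ^ 'n) set \<Rightarrow> (real ^ 'n) set \<Rightarrow> ennreal" where
  "Lint s A D = (\<integral>\<^sup>+ x. \<integral>\<^sup>+ y.
      indicator A x * indicator D y *
      ennreal (1 / (norm (x - y) powr (real CARD('n) + 2 * s))) \<partial>lebesgue \<partial>lebesgue)"

definition is_cube :: "(real ^ 'n) set \<Rightarrow> bool" where
  "is_cube Q \<longleftrightarrow> (\<exists>a r. r > 0 \<and> Q = cbox a (a + r *\<^sub>R One))"

text \<open>Right-hand side of the estimate; when |B| = 0 the right-hand side is +infinity
  (log(|Q|/0) = +infinity, (|Q|/0)^(2s-1) = +infinity).\<close>
definition rhs :: "nat \<Rightarrow> real \<Rightarrow> real \<Rightarrow> real \<Rightarrow> real \<Rightarrow> ennreal" where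
  "rhs n s \<delta> q b =
     (if b = 0 then \<infinity>
      else if s = 1/2 then ennreal (\<delta> * q powr ((real n - 1) / real n) * ln (q / b))
      else ennreal (\<delta> * q powr ((real n - 2 * s) / real n) * (q / b) powr (2 * s - 1)))"

end

theory Submission
  imports Defs "HOL-Analysis.Analysis"
begin

definition bx :: "real \<Rightarrow> (real^'n) set" where "bx \<rho> = {w. \<forall>i. \<bar>w$i\<bar> \<le> \<rho>}"

lemma bx_borel[measurable]: "bx \<rho> \<in> sets borel"
  unfolding bx_def by measurable

lemma one_vec_nth[simp]: "(One::real^'n) $ i = 1"
  by (metis one_index Cart_1)

lemma cube_bx:
  fixes a x w :: "real^'n"
  assumes "x \<in> cbox a (a + r *\<^sub>R One)" "x + w \<in> cbox a (a + r *\<^sub>R One)"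
  shows "w \<in> bx r"
proof -
  have h1: "a$i \<le> x$i \<and> x$i \<le> a$i + r" for i
    using assms(1) unfolding mem_box_cart(2)
    by (simp only: vector_add_component vector_scaleR_component one_vec_nth) simp
  have h2: "a$i \<le> x$i + w$i \<and> x$i + w$i \<le> a$i + r" for i
    using assms(2) unfolding mem_box_cart(2)
    by (simp only: vector_add_component vector_scaleR_component one_vec_nth) simp
  show ?thesis unfolding bx_def using h1 h2 by (auto simp: abs_le_iff) (smt (verit, best) h1 h2)+
qed

lemma step_exists: "P 0 \<Longrightarrow> \<not> P k \<Longrightarrow> \<exists>j<k. P j \<and> \<not> P (Suc j)"
proof (induction k)
  case 0 then show ?case by simp
next
  case (Suc k) show ?case
  proof (cases "P k")
    case True then show ?thesis using Suc by auto
  next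
    case False then obtain j where "j<k" "P j" "\<not> P (Suc j)" using Suc by auto
    then show ?thesis by (intro exI[of _ j]) (auto simp: add.assoc)
  qed
qed

lemma path:
  fixes x w :: "real^'n" and K :: nat
  assumes xA: "x \<in> A" and xwD: "x + w \<in> D" and AQ: "A \<subseteq> Q" and DQ: "D \<subseteq> Q"
    and disj: "A \<inter> D = {}" and cQ: "convex Q" and K: "K \<ge> 1"
  shows "\<exists>j<K. (x + (real j / real K) *\<^sub>R w \<in> A \<and> x + (real j / real K) *\<^sub>R w + (1 / real K) *\<^sub>R w \<in> D)
           \<or> (0 < j \<and> x + (real j / real K) *\<^sub>R w \<in> Q - (A \<union> D))"
proof -
  define z where "z j = x + (real j / real K) *\<^sub>R w" for j
  have zQ: "z j \<in> Q" if "j \<le> K" for j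
  proof -
    have t0: "0 \<le> real j / real K" and t1: "real j / real K \<le> 1" using that K by auto
    have "(1 - real j / real K) *\<^sub>R x + (real j / real K) *\<^sub>R (x + w) \<in> Q"
      using cQ xA xwD AQ DQ t0 t1 by (intro convexD) auto
    moreover have "(1 - real j / real K) *\<^sub>R x + (real j / real K) *\<^sub>R (x + w) = z j"
      unfolding z_def by (simp add: algebra_simps)
    ultimately show ?thesis by simp
  qed
  have zS: "z (Suc j) = z j + (1 / real K) *\<^sub>R w" for j
    unfolding z_def by (simp add: add_divide_distrib scaleR_add_left)
  have z0: "z 0 = x" by (simp add: z_def)
  have zK: "z K = x + w" using K by (simp add: z_def)
  obtain j where j: "j < K" "z j \<in> A" "z (Suc j) \<notin> A"
    using step_exists[of "\<lambda>j. z j \<in> A" K] z0 zK xA xwD disj by auto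
  have "z (Suc j) \<in> Q" using j zQ by simp
  show ?thesis
  proof (cases "z (Suc j) \<in> D")
    case True then show ?thesis using j zS[of j] unfolding z_def by (intro exI[of _ j]) (auto simp: add.assoc)
  next
    case False
    have "Suc j \<noteq> K" using False zK xwD by auto
    then have "Suc j < K" using j by simp
    then show ?thesis using False j \<open>z (Suc j) \<in> Q\<close> unfolding z_def
      by (intro exI[of _ "Suc j"]) auto
  qed
qed

lemma nn_integral_affine_vec:
  fixes f :: "real^'n \<Rightarrow> ennreal" and c :: real
  assumes f[measurable]: "f \<in> borel_measurable borel" and c: "c \<noteq> 0"
  shows "(\<integral>\<^sup>+x. f (t + c *\<^sub>R x) \<partial>lborel) = ennreal (1 / \<bar>c\<bar>^CARD('n)) * (\<integral>\<^sup>+x. f x \<partial>lborel)"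
proof -
  have "(\<integral>\<^sup>+x. f x \<partial>lborel) = ennreal (\<bar>c\<bar>^CARD('n)) * (\<integral>\<^sup>+x. f (t + c *\<^sub>R x) \<partial>lborel)"
    by (subst lborel_affine[OF c, of t])
       (simp add: nn_integral_density nn_integral_distr nn_integral_cmult)
  then have "ennreal (1 / \<bar>c\<bar>^CARD('n)) * (\<integral>\<^sup>+x. f x \<partial>lborel) =
     ennreal (1 / \<bar>c\<bar>^CARD('n)) * ennreal (\<bar>c\<bar>^CARD('n)) * (\<integral>\<^sup>+x. f (t + c *\<^sub>R x) \<partial>lborel)"
    by (simp add: mult.assoc)
  also have "ennreal (1 / \<bar>c\<bar>^CARD('n)) * ennreal (\<bar>c\<bar>^CARD('n)) = 1"
    using c by (simp add: ennreal_mult'[symmetric])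
  finally show ?thesis by simp
qed

lemma nn_integral_transl_vec:
  fixes f :: "real^'n \<Rightarrow> ennreal"
  assumes f[measurable]: "f \<in> borel_measurable borel"
  shows "(\<integral>\<^sup>+x. f (x + t) \<partial>lborel) = (\<integral>\<^sup>+x. f x \<partial>lborel)"
  using nn_integral_affine_vec[OF f, of 1 t] by (simp add: add.commute)

definition FF :: "(real^'n) set \<Rightarrow> (real^'n) set \<Rightarrow> real^'n \<Rightarrow> ennreal" where
  "FF A D w = (\<integral>\<^sup>+x. indicator A x * indicator D (x + w) \<partial>lborel)"

definition GG :: "(real^'n) set \<Rightarrow> (real^'n) set \<Rightarrow> real \<Rightarrow> ennreal" where
  "GG A D \<rho> = (\<integral>\<^sup>+w. indicator (bx \<rho>) w * FF A D w \<partial>lborel)"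

lemma FF_meas[measurable]:
  assumes [measurable]: "A \<in> sets borel" "D \<in> sets borel"
  shows "FF A D \<in> borel_measurable borel"
  unfolding FF_def by measurable

lemma aux_U:
  fixes B Q :: "(real^'n) set"
  assumes [measurable]: "B \<in> sets borel" "Q \<in> sets borel" and c: "c \<noteq> 0"
  shows "(\<integral>\<^sup>+w. \<integral>\<^sup>+x. indicator B (x + c *\<^sub>R w) * indicator Q x \<partial>lborel \<partial>lborel)
     = ennreal (1/\<bar>c\<bar>^CARD('n)) * emeasure lborel B * emeasure lborel Q"
proof -
  have "(\<integral>\<^sup>+w. \<integral>\<^sup>+x. indicator B (x + c *\<^sub>R w) * indicator Q x \<partial>lborel \<partial>lborel)
     = (\<integral>\<^sup>+x. \<integral>\<^sup>+w. indicator B (x + c *\<^sub>R w) * indicator Q x \<partial>lborel \<partial>lborel)"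
    by (rule lborel_pair.Fubini') measurable
  also have "\<dots> = (\<integral>\<^sup>+x. (\<integral>\<^sup>+w. indicator B (x + c *\<^sub>R w) \<partial>lborel) * indicator Q x \<partial>lborel)"
    by (intro nn_integral_cong nn_integral_multc) measurable
  also have "\<dots> = (\<integral>\<^sup>+x. (ennreal (1/\<bar>c\<bar>^CARD('n)) * emeasure lborel B) * indicator Q x \<partial>lborel)"
    by (intro nn_integral_cong) (simp add: nn_integral_affine_vec[OF _ c])
  also have "\<dots> = ennreal (1/\<bar>c\<bar>^CARD('n)) * emeasure lborel B * emeasure lborel Q"
    by (simp add: nn_integral_cmult)
  finally show ?thesis .
qed

lemma U_bound:
  fixes B Q :: "(real^'n) set"
  assumes [measurable]: "B \<in> sets borel" "Q \<in> sets borel" and t: "0 < t" "t < 1"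
  shows "(\<integral>\<^sup>+w. \<integral>\<^sup>+x. indicator B (x + t *\<^sub>R w) * indicator Q x * indicator Q (x + w) \<partial>lborel \<partial>lborel)
     \<le> 2 ^ CARD('n) * emeasure lborel B * emeasure lborel Q"
proof (cases "t \<ge> 1/2")
  case True
  have "(\<integral>\<^sup>+w. \<integral>\<^sup>+x. indicator B (x + t *\<^sub>R w) * indicator Q x * indicator Q (x + w) \<partial>lborel \<partial>lborel)
     \<le> (\<integral>\<^sup>+w. \<integral>\<^sup>+x. indicator B (x + t *\<^sub>R w) * indicator Q x \<partial>lborel \<partial>lborel)"
    by (intro nn_integral_mono) (auto simp: indicator_def)
  also have "\<dots> = ennreal (1/\<bar>t\<bar>^CARD('n)) * emeasure lborel B * emeasure lborel Q"
    using t by (intro aux_U) auto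
  also have "\<dots> \<le> 2 ^ CARD('n) * emeasure lborel B * emeasure lborel Q"
  proof -
    have "1/\<bar>t\<bar>^CARD('n) \<le> 2 ^ CARD('n)"
    proof -
      have "1/\<bar>t\<bar>^CARD('n) = (1/t)^CARD('n)" using t by (simp add: power_one_over)
      also have "\<dots> \<le> 2 ^ CARD('n)" using t True by (intro power_mono) (auto simp: field_simps)
      finally show ?thesis .
    qed
    then have "ennreal (1/\<bar>t\<bar>^CARD('n)) \<le> 2 ^ CARD('n)"
      by (metis ennreal_le_iff ennreal_numeral ennreal_power zero_le_numeral zero_le_power)
    then show ?thesis by (intro mult_right_mono) auto
  qed
  finally show ?thesis .
next
  case False
  have eq: "(\<integral>\<^sup>+x. indicator B (x + t *\<^sub>R w) * indicator Q (x + w) \<partial>lborel)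
     = (\<integral>\<^sup>+x. indicator B (x + (t - 1) *\<^sub>R w) * indicator Q x \<partial>lborel)" for w
  proof -
    have "(\<integral>\<^sup>+x. indicator B (x + t *\<^sub>R w) * indicator Q (x + w) \<partial>lborel)
       = (\<integral>\<^sup>+x. (\<lambda>y. indicator B (y + (t - 1) *\<^sub>R w) * indicator Q y) (x + w) \<partial>lborel)"
      by (intro nn_integral_cong) (simp add: algebra_simps)
    also have "\<dots> = (\<integral>\<^sup>+x. indicator B (x + (t - 1) *\<^sub>R w) * indicator Q x \<partial>lborel)"
      by (rule nn_integral_transl_vec) measurable
    finally show ?thesis .
  qed
  have "(\<integral>\<^sup>+w. \<integral>\<^sup>+x. indicator B (x + t *\<^sub>R w) * indicator Q x * indicator Q (x + w) \<partial>lborel \<partial>lborel)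
     \<le> (\<integral>\<^sup>+w. \<integral>\<^sup>+x. indicator B (x + t *\<^sub>R w) * indicator Q (x + w) \<partial>lborel \<partial>lborel)"
    by (intro nn_integral_mono) (auto simp: indicator_def)
  also have "\<dots> = (\<integral>\<^sup>+w. \<integral>\<^sup>+x. indicator B (x + (t - 1) *\<^sub>R w) * indicator Q x \<partial>lborel \<partial>lborel)"
    by (simp add: eq)
  also have "\<dots> = ennreal (1/\<bar>t - 1\<bar>^CARD('n)) * emeasure lborel B * emeasure lborel Q"
    using t by (intro aux_U) auto
  also have "\<dots> \<le> 2 ^ CARD('n) * emeasure lborel B * emeasure lborel Q"
  proof -
    have "1/\<bar>t - 1\<bar>^CARD('n) \<le> 2 ^ CARD('n)"
    proof -
      have "1/\<bar>t - 1\<bar>^CARD('n) = (1/(1 - t))^CARD('n)" using t by (simp add: power_one_over)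
      also have "\<dots> \<le> 2 ^ CARD('n)" using t False by (intro power_mono) (auto simp: field_simps)
      finally show ?thesis .
    qed
    then have "ennreal (1/\<bar>t - 1\<bar>^CARD('n)) \<le> 2 ^ CARD('n)"
      by (metis ennreal_le_iff ennreal_numeral ennreal_power zero_le_numeral zero_le_power)
    then show ?thesis by (intro mult_right_mono) auto
  qed
  finally show ?thesis .
qed

lemma key:
  fixes A D :: "(real^'n) set" and a :: "real^'n" and K :: nat
  assumes [measurable]: "A \<in> sets borel" "D \<in> sets borel"
    and AQ: "A \<subseteq> cbox a (a + r *\<^sub>R One)" and DQ: "D \<subseteq> cbox a (a + r *\<^sub>R One)"
    and disj: "A \<inter> D = {}" and r: "r > 0" and K: "K \<ge> 1"
  shows "emeasure lborel A * emeasure lborel D \<le> ennreal (real K ^ (CARD('n) + 1)) * GG A D (r / real K)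
     + of_nat (K - 1) * (2 ^ CARD('n) * emeasure lborel (cbox a (a + r *\<^sub>R One) - (A \<union> D)) * emeasure lborel (cbox a (a + r *\<^sub>R One)))"
proof -
  define Q where "Q = cbox a (a + r *\<^sub>R One)"
  define B where "B = Q - (A \<union> D)"
  have [measurable]: "Q \<in> sets borel" "B \<in> sets borel" unfolding B_def Q_def by auto
  define T where "T j x w = (indicator A (x + (real j / real K) *\<^sub>R w) * indicator D (x + (real j/real K) *\<^sub>R w + (1/real K) *\<^sub>R w) * indicator (bx r) w :: ennreal)" for j x w
  define U where "U j x w = (indicator B (x + (real j/real K) *\<^sub>R w) * indicator Q x * indicator Q (x + w) :: ennreal)" for j x w
  have [measurable]: "case_prod (T j) \<in> borel_measurable (lborel \<Otimes>\<^sub>M lborel)" for j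
    unfolding T_def by measurable
  have [measurable]: "case_prod (U j) \<in> borel_measurable (lborel \<Otimes>\<^sub>M lborel)" for j
    unfolding U_def by measurable
  have pw: "indicator A x * indicator D (x + w) \<le> (\<Sum>j<K. T j x w) + (\<Sum>j\<in>{1..<K}. U j x w)" for x w
  proof (cases "x \<in> A \<and> x + w \<in> D")
    case True
    then have wb: "w \<in> bx r" using AQ DQ by (intro cube_bx[of x a r]) auto
    have cQ: "convex Q" unfolding Q_def by (rule convex_box)
    obtain j where j: "j < K" and
      alt: "(x + (real j / real K) *\<^sub>R w \<in> A \<and> x + (real j / real K) *\<^sub>R w + (1 / real K) *\<^sub>R w \<in> D)
           \<or> (0 < j \<and> x + (real j / real K) *\<^sub>R w \<in> Q - (A \<union> D))"
      using path[of x A w D Q K] True AQ DQ disj cQ K unfolding Q_def by blast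
    have "1 \<le> (\<Sum>j<K. T j x w) + (\<Sum>j\<in>{1..<K}. U j x w)"
      using alt
    proof
      assume h: "x + (real j / real K) *\<^sub>R w \<in> A \<and> x + (real j / real K) *\<^sub>R w + (1 / real K) *\<^sub>R w \<in> D"
      have "1 = T j x w" using h wb unfolding T_def by simp
      also have "\<dots> \<le> (\<Sum>j<K. T j x w)" using j by (intro member_le_sum) auto
      also have "\<dots> \<le> (\<Sum>j<K. T j x w) + (\<Sum>j\<in>{1..<K}. U j x w)" by simp
      finally show ?thesis .
    next
      assume h: "0 < j \<and> x + (real j / real K) *\<^sub>R w \<in> Q - (A \<union> D)"
      have "x \<in> Q" "x + w \<in> Q" using True AQ DQ unfolding Q_def by auto
      then have "1 = U j x w" using h unfolding U_def B_def by simp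
      also have "\<dots> \<le> (\<Sum>j\<in>{1..<K}. U j x w)" using j h by (intro member_le_sum) auto
      also have "\<dots> \<le> (\<Sum>j<K. T j x w) + (\<Sum>j\<in>{1..<K}. U j x w)" by simp
      finally show ?thesis .
    qed
    then show ?thesis using True by simp
  next
    case False then show ?thesis by (auto simp: indicator_def)
  qed
  have "emeasure lborel A * emeasure lborel D = (\<integral>\<^sup>+x. indicator A x * emeasure lborel D \<partial>lborel)"
    by (simp add: nn_integral_multc)
  also have "\<dots> = (\<integral>\<^sup>+x. indicator A x * (\<integral>\<^sup>+w. indicator D (w + x) \<partial>lborel) \<partial>lborel)"
    by (intro nn_integral_cong) (simp add: nn_integral_transl_vec)
  also have "\<dots> = (\<integral>\<^sup>+x. \<integral>\<^sup>+w. indicator A x * indicator D (x + w) \<partial>lborel \<partial>lborel)"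
    by (intro nn_integral_cong) (simp add: nn_integral_cmult add.commute)
  also have "\<dots> = (\<integral>\<^sup>+w. \<integral>\<^sup>+x. indicator A x * indicator D (x + w) \<partial>lborel \<partial>lborel)"
    by (rule lborel_pair.Fubini'[symmetric]) measurable
  also have "\<dots> \<le> (\<integral>\<^sup>+w. \<integral>\<^sup>+x. (\<Sum>j<K. T j x w) + (\<Sum>j\<in>{1..<K}. U j x w) \<partial>lborel \<partial>lborel)"
    by (intro nn_integral_mono pw)
  also have "\<dots> = (\<integral>\<^sup>+w. (\<Sum>j<K. \<integral>\<^sup>+x. T j x w \<partial>lborel) + (\<Sum>j\<in>{1..<K}. \<integral>\<^sup>+x. U j x w \<partial>lborel) \<partial>lborel)"
    by (intro nn_integral_cong) (simp add: nn_integral_add nn_integral_sum)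
  also have "\<dots> = (\<Sum>j<K. \<integral>\<^sup>+w. \<integral>\<^sup>+x. T j x w \<partial>lborel \<partial>lborel) + (\<Sum>j\<in>{1..<K}. \<integral>\<^sup>+w. \<integral>\<^sup>+x. U j x w \<partial>lborel \<partial>lborel)"
    by (simp add: nn_integral_add nn_integral_sum)
  also have "\<dots> \<le> (\<Sum>j<K. ennreal (real K ^ CARD('n)) * GG A D (r / real K)) + (\<Sum>j\<in>{1..<K}. 2 ^ CARD('n) * emeasure lborel B * emeasure lborel Q)"
  proof (intro add_mono sum_mono)
    fix j assume "j \<in> {..<K}"
    have inner: "(\<integral>\<^sup>+x. T j x w \<partial>lborel) = indicator (bx (r / real K)) ((1 / real K) *\<^sub>R w) * FF A D (0 + (1 / real K) *\<^sub>R w)" for w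
    proof -
      have "(\<integral>\<^sup>+x. T j x w \<partial>lborel) = (\<integral>\<^sup>+x. (\<lambda>y. indicator A y * indicator D (y + (1/real K) *\<^sub>R w)) (x + (real j / real K) *\<^sub>R w) * indicator (bx r) w \<partial>lborel)"
        unfolding T_def by simp
      also have "\<dots> = (\<integral>\<^sup>+x. (\<lambda>y. indicator A y * indicator D (y + (1/real K) *\<^sub>R w)) (x + (real j / real K) *\<^sub>R w) \<partial>lborel) * indicator (bx r) w"
        by (rule nn_integral_multc) measurable
      also have "\<dots> = FF A D ((1/real K) *\<^sub>R w) * indicator (bx r) w"
      proof -
        have "(\<integral>\<^sup>+x. (\<lambda>y. indicator A y * indicator D (y + (1/real K) *\<^sub>R w)) (x + (real j / real K) *\<^sub>R w) \<partial>lborel) = FF A D ((1/real K) *\<^sub>R w)"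
          unfolding FF_def by (rule nn_integral_transl_vec) measurable
        then show ?thesis by simp
      qed
      also have "indicator (bx r) w = (indicator (bx (r / real K)) ((1 / real K) *\<^sub>R w) :: ennreal)"
        using K by (simp add: bx_def indicator_def divide_le_cancel abs_div)
      finally show ?thesis by (simp add: mult.commute)
    qed
    have "(\<integral>\<^sup>+w. \<integral>\<^sup>+x. T j x w \<partial>lborel \<partial>lborel) = (\<integral>\<^sup>+w. (\<lambda>v. indicator (bx (r / real K)) v * FF A D v) (0 + (1 / real K) *\<^sub>R w) \<partial>lborel)"
      by (simp only: inner) simp
    also have "\<dots> = ennreal (1 / \<bar>1 / real K\<bar>^CARD('n)) * GG A D (r / real K)"
      unfolding GG_def by (rule nn_integral_affine_vec) (measurable, insert K, auto)
    finally show "(\<integral>\<^sup>+w. \<integral>\<^sup>+x. T j x w \<partial>lborel \<partial>lborel) \<le> ennreal (real K ^ CARD('n)) * GG A D (r / real K)"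
      using K by (simp add: power_one_over)
  next
    fix j assume j: "j \<in> {1..<K}"
    show "(\<integral>\<^sup>+w. \<integral>\<^sup>+x. U j x w \<partial>lborel \<partial>lborel) \<le> 2 ^ CARD('n) * emeasure lborel B * emeasure lborel Q"
      unfolding U_def using j by (intro U_bound) auto
  qed
  also have "\<dots> = ennreal (real K ^ (CARD('n) + 1)) * GG A D (r / real K)
     + of_nat (K - 1) * (2 ^ CARD('n) * emeasure lborel B * emeasure lborel Q)"
  proof -
    have "(\<Sum>j<K. ennreal (real K ^ CARD('n)) * GG A D (r / real K)) = of_nat K * (ennreal (real K ^ CARD('n)) * GG A D (r / real K))"
      by simp
    also have "\<dots> = ennreal (real K ^ (CARD('n) + 1)) * GG A D (r / real K)"
      by (simp add: mult.assoc[symmetric] ennreal_of_nat_eq_real_of_nat ennreal_mult'[symmetric] mult.commute)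
    finally show ?thesis by simp
  qed
  finally show ?thesis unfolding B_def Q_def .
qed

lemma geom_gen:
  fixes a :: "nat \<Rightarrow> real"
  assumes M: "M \<ge> 0" and a0: "\<And>j. a j \<ge> 0" and aS: "\<And>j. a (Suc j) \<ge> 2 * a j"
  shows "(\<Sum>j\<le>J. (if a j \<le> M then a j else 0)) \<le> 2 * min M (a J)"
proof (induction J)
  case 0 show ?case using a0[of 0] M by (cases "a 0 \<le> M") (auto simp: min_def)
next
  case (Suc J)
  define S where "S = (\<Sum>j\<le>J. (if a j \<le> M then a j else 0))"
  have IH: "S \<le> 2 * min M (a J)" using Suc by (simp add: S_def)
  have eq: "(\<Sum>j\<le>Suc J. (if a j \<le> M then a j else 0)) = S + (if a (Suc J) \<le> M then a (Suc J) else 0)"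
    by (simp add: S_def)
  show ?case unfolding eq using IH a0[of J] a0[of "Suc J"] aS[of J] M
    by (cases "a (Suc J) \<le> M"; cases "M \<le> a J"; cases "M \<le> a (Suc J)"; simp add: min_def; linarith)
qed

lemma powr_two_ge:
  fixes p :: real assumes "p \<ge> 1" shows "2 powr p \<ge> 2"
  using powr_mono[OF assms, of 2] by simp

lemma geom_aux:
  fixes m r p :: real
  assumes m: "m > 0" and r: "r > 0" and p: "p \<ge> 1"
  shows "(\<Sum>j\<le>J. (if m \<le> r / 2^j then (2^j / r) powr p else 0)) \<le> 2 * m powr (-p)"
proof -
  define a where "a j = (2^j / r) powr p" for j :: nat
  have iff: "(m \<le> r / 2^j) \<longleftrightarrow> a j \<le> m powr (-p)" for j
  proof -
    have "(m \<le> r / 2^j) \<longleftrightarrow> 2^j / r \<le> 1 / m" using m r by (simp add: field_simps)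
    also have "\<dots> \<longleftrightarrow> (2^j / r) powr p \<le> (1/m) powr p"
    proof
      assume "2^j / r \<le> 1 / m" then show "(2^j / r) powr p \<le> (1/m) powr p"
        using r p by (intro powr_mono2) auto
    next
      assume h: "(2^j / r) powr p \<le> (1/m) powr p"
      show "2^j / r \<le> 1 / m"
      proof (rule ccontr)
        assume "\<not> 2^j / r \<le> 1 / m"
        then have "(1/m) powr p < (2^j / r) powr p" using m p by (intro powr_less_mono2) auto
        then show False using h by simp
      qed
    qed
    also have "(1/m) powr p = m powr (-p)" using m by (simp add: powr_minus_divide powr_divide)
    finally show ?thesis by (simp add: a_def)
  qed
  have aS: "a (Suc j) \<ge> 2 * a j" for j
  proof -
    have "a (Suc j) = (2 * (2^j / r)) powr p" unfolding a_def by (simp add: power_Suc)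
    also have "\<dots> = 2 powr p * a j" unfolding a_def using r by (intro powr_mult; simp)
    finally show ?thesis using powr_two_ge[OF p] by (simp add: a_def mult_right_mono)
  qed
  have "(\<Sum>j\<le>J. (if m \<le> r / 2^j then (2^j / r) powr p else 0)) = (\<Sum>j\<le>J. (if a j \<le> m powr (-p) then a j else 0))"
    using iff by (intro sum.cong) (auto simp: a_def)
  also have "\<dots> \<le> 2 * min (m powr (-p)) (a J)"
    by (rule geom_gen[where a=a, OF _ _ aS]) (auto simp: a_def)
  also have "\<dots> \<le> 2 * m powr (-p)" by simp
  finally show ?thesis .
qed

lemma bx_infnorm: "w \<in> bx \<rho> \<Longrightarrow> infnorm (w::real^'n) \<le> \<rho>"
  unfolding infnorm_cart bx_def by (intro cSup_least) auto

lemma kernel_pw_real: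
  fixes w :: "real^'n" and r p :: real
  assumes w: "w \<noteq> 0" and r: "r > 0" and p: "p \<ge> 1"
  shows "(\<Sum>j\<le>J. (1/2) * sqrt (real CARD('n)) powr (-p) * (2^j/r) powr p * indicator (bx (r/2^j)) w)
           \<le> 1 / norm w powr p"
proof -
  define m where "m = infnorm w"
  define c0 where "c0 = (1/2) * sqrt (real CARD('n)) powr (-p)"
  have m: "m > 0" using w by (simp add: m_def infnorm_pos_lt)
  have c0: "c0 \<ge> 0" by (simp add: c0_def)
  have "(\<Sum>j\<le>J. c0 * (2^j/r) powr p * indicator (bx (r/2^j)) w)
      \<le> (\<Sum>j\<le>J. c0 * (if m \<le> r / 2^j then (2^j / r) powr p else 0))"
  proof (intro sum_mono)
    fix j show "c0 * (2^j/r) powr p * indicator (bx (r/2^j)) w \<le> c0 * (if m \<le> r / 2^j then (2^j / r) powr p else 0)"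
      using bx_infnorm[of w "r/2^j"] c0 by (auto simp: m_def indicator_def)
  qed
  also have "\<dots> = c0 * (\<Sum>j\<le>J. (if m \<le> r / 2^j then (2^j / r) powr p else 0))"
    by (simp add: sum_distrib_left)
  also have "\<dots> \<le> c0 * (2 * m powr (-p))"
    using geom_aux[OF m r p] c0 by (intro mult_left_mono) auto
  also have "\<dots> = (sqrt (real CARD('n)) * m) powr (-p)"
    unfolding c0_def using m by (simp add: powr_mult)
  also have "\<dots> = 1 / (sqrt (real CARD('n)) * m) powr p"
    by (simp add: powr_minus_divide)
  also have "\<dots> \<le> 1 / norm w powr p"
  proof -
    have "norm w \<le> sqrt (real CARD('n)) * m" using norm_le_infnorm[of w] by (simp add: m_def)
    moreover have "norm w > 0" using w by simp
    ultimately have "norm w powr p \<le> (sqrt (real CARD('n)) * m) powr p"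
      using p by (intro powr_mono2) auto
    moreover have "norm w powr p > 0" using w by simp
    moreover have "(sqrt (real CARD('n)) * m) powr p > 0" using m by simp
    ultimately show ?thesis by (intro divide_left_mono) auto
  qed
  finally show ?thesis by (simp add: c0_def)
qed

lemma kernel_lower:
  fixes A D :: "(real^'n) set" and \<phi> :: "real^'n \<Rightarrow> ennreal" and p :: real
  assumes [measurable]: "A \<in> sets borel" "D \<in> sets borel" "\<phi> \<in> borel_measurable borel"
    and disj: "A \<inter> D = {}"
    and phi: "\<And>w. w \<noteq> 0 \<Longrightarrow> \<phi> w \<le> ennreal (1 / norm w powr p)"
  shows "(\<integral>\<^sup>+w. \<phi> w * FF A D w \<partial>lborel) \<le>
    (\<integral>\<^sup>+x. \<integral>\<^sup>+y. indicator A x * indicator D y * ennreal (1 / norm (x - y) powr p) \<partial>lborel \<partial>lborel)"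
proof -
  have "(\<integral>\<^sup>+w. \<phi> w * FF A D w \<partial>lborel) = (\<integral>\<^sup>+w. \<integral>\<^sup>+x. indicator A x * indicator D (x + w) * \<phi> w \<partial>lborel \<partial>lborel)"
    unfolding FF_def by (intro nn_integral_cong) (simp add: nn_integral_cmult[symmetric] mult.commute mult.left_commute)
  also have "\<dots> = (\<integral>\<^sup>+x. \<integral>\<^sup>+w. indicator A x * indicator D (x + w) * \<phi> w \<partial>lborel \<partial>lborel)"
    by (rule lborel_pair.Fubini') measurable
  also have "\<dots> \<le> (\<integral>\<^sup>+x. \<integral>\<^sup>+w. (\<lambda>y. indicator A x * indicator D y * ennreal (1 / norm (x - y) powr p)) (w + x) \<partial>lborel \<partial>lborel)"
  proof (intro nn_integral_mono)
    fix x w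
    show "indicator A x * indicator D (x + w) * \<phi> w \<le> (\<lambda>y. indicator A x * indicator D y * ennreal (1 / norm (x - y) powr p)) (w + x)"
    proof (cases "x \<in> A \<and> x + w \<in> D")
      case True
      then have "w \<noteq> 0" using disj by auto
      then have "\<phi> w \<le> ennreal (1 / norm (x - (w + x)) powr p)" using phi by simp
      then show ?thesis using True by (simp add: add.commute)
    next
      case False then show ?thesis by (auto simp: indicator_def)
    qed
  qed
  also have "\<dots> = (\<integral>\<^sup>+x. \<integral>\<^sup>+y. indicator A x * indicator D y * ennreal (1 / norm (x - y) powr p) \<partial>lborel \<partial>lborel)"
    by (intro nn_integral_cong nn_integral_transl_vec) measurable
  finally show ?thesis .
qed

lemma emeasure_cube:
  fixes a :: "real^'n" assumes r: "r > 0"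
  shows "emeasure lborel (cbox a (a + r *\<^sub>R One)) = ennreal (r ^ CARD('n))"
proof -
  have "\<forall>b\<in>Basis. a \<bullet> b \<le> (a + r *\<^sub>R One) \<bullet> b" using r by (simp add: inner_simps)
  then show ?thesis using r by (simp add: emeasure_lborel_cbox_eq inner_simps)
qed

lemma real_ident:
  fixes r s sig Kr :: real and n :: nat
  assumes r: "r > 0" and Kr: "Kr > 0"
  shows "((1/2) * sqrt (real n) powr (-(real n + 2 * s)) * (Kr/r) powr (real n + 2 * s)) / Kr^(n+1) * (sig^2 * (r^n)^2 / 2)
     = (1/4) * sqrt (real n) powr (-(real n + 2 * s)) * sig^2 * r powr (real n - 2 * s) * Kr powr (2 * s - 1)"
proof -
  have e1: "(Kr/r) powr (real n + 2 * s) = Kr powr (real n + 2 * s) / r powr (real n + 2 * s)"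
    using r Kr by (simp add: powr_divide)
  have e2: "Kr^(n+1) = Kr powr (real n + 1)" using Kr powr_realpow[OF Kr, of "n+1"] by (simp add: add.commute)
  have e3: "(r^n)^2 = r powr (2 * real n)"
  proof -
    have "(r^n)^2 = r^(n*2)" by (simp only: power_mult)
    also have "\<dots> = r powr (real (n*2))" by (rule powr_realpow[OF r, symmetric])
    finally show ?thesis by (simp add: mult.commute)
  qed
  have e4: "Kr powr (real n + 2 * s) / Kr powr (real n + 1) = Kr powr (2 * s - 1)"
    using Kr by (simp add: powr_diff[symmetric])
  have e5: "r powr (2 * real n) / r powr (real n + 2 * s) = r powr (real n - 2 * s)"
    using r by (simp add: powr_diff[symmetric])
  have gen: "((1/2) * C * (a/d)) / b * (S * c / 2) = (1/4) * C * S * (c/d) * (a/b)"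
    if "b \<noteq> 0" "d \<noteq> 0" for a b c d C S :: real
    using that by (simp add: field_simps)
  have "((1/2) * sqrt (real n) powr (-(real n + 2 * s)) * (Kr powr (real n + 2 * s) / r powr (real n + 2 * s))) / Kr powr (real n + 1) * (sig^2 * r powr (2 * real n) / 2)
     = (1/4) * sqrt (real n) powr (-(real n + 2 * s)) * sig^2 * (r powr (2 * real n) / r powr (real n + 2 * s)) * (Kr powr (real n + 2 * s) / Kr powr (real n + 1))"
    using r Kr by (intro gen) auto
  then show ?thesis unfolding e1 e2 e3 e4 e5 by (simp add: mult_ac)
qed

lemma ennreal_half_cancel:
  fixes X Z :: real and Y :: ennreal
  assumes "ennreal X \<le> Y + ennreal Z" "Z \<le> X / 2" "0 \<le> Z"
  shows "ennreal (X / 2) \<le> Y"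
proof -
  have "ennreal (X/2) + ennreal Z \<le> ennreal (X/2) + ennreal (X/2)"
    using assms by (intro add_left_mono ennreal_leI) auto
  also have "\<dots> = ennreal X" using assms by (simp add: ennreal_plus[symmetric] del: ennreal_plus)
  also have "\<dots> \<le> Y + ennreal Z" by fact
  finally show ?thesis by (simp add: ennreal_add_left_cancel_le add.commute)
qed

lemma term_bound:
  fixes A D :: "(real^'n) set" and a :: "real^'n" and s sig r :: real and j :: nat
  assumes [measurable]: "A \<in> sets borel" "D \<in> sets borel"
    and AQ: "A \<subseteq> cbox a (a + r *\<^sub>R One)" and DQ: "D \<subseteq> cbox a (a + r *\<^sub>R One)"
    and disj: "A \<inter> D = {}" and r: "r > 0"
    and mA: "measure lborel A \<ge> sig * r^CARD('n)" and mD: "measure lborel D \<ge> sig * r^CARD('n)" and sig: "sig > 0"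
    and cond: "(2^j - 1) * 2^CARD('n) * measure lborel (cbox a (a + r *\<^sub>R One) - (A \<union> D)) \<le> sig^2 * r^CARD('n) / 2"
  shows "ennreal ((1/4) * sqrt (real CARD('n)) powr (-(real CARD('n) + 2 * s)) * sig^2 * r powr (real CARD('n) - 2 * s) * (2^j) powr (2 * s - 1))
     \<le> ennreal ((1/2) * sqrt (real CARD('n)) powr (-(real CARD('n) + 2 * s)) * (2^j/r) powr (real CARD('n) + 2 * s)) * GG A D (r / 2^j)"
proof -
  define Q where "Q = cbox a (a + r *\<^sub>R One)"
  define B where "B = Q - (A \<union> D)"
  define q where "q = r^CARD('n)"
  define K :: nat where "K = 2^j"
  define Kr :: real where "Kr = 2^j"
  define cj where "cj = (1/2) * sqrt (real CARD('n)) powr (-(real CARD('n) + 2 * s)) * (2^j/r) powr (real CARD('n) + 2 * s)"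
  have [measurable]: "Q \<in> sets borel" "B \<in> sets borel" unfolding Q_def B_def by auto
  have K1: "K \<ge> 1" by (simp add: K_def)
  have KKr: "real K = Kr" by (simp add: K_def Kr_def)
  have Kr: "Kr > 0" by (simp add: Kr_def)
  have eQ: "emeasure lborel Q = ennreal q" unfolding Q_def q_def using emeasure_cube[OF r] .
  have fin: "emeasure lborel X = ennreal (measure lborel X)" if "X \<subseteq> Q" "X \<in> sets borel" for X
  proof -
    have "Q \<in> sets lborel" unfolding Q_def by simp
    then have "emeasure lborel X \<le> emeasure lborel Q" by (rule emeasure_mono[OF that(1)])
    then have "emeasure lborel X \<le> ennreal q" by (simp only: eQ)
    then have "emeasure lborel X < top" using ennreal_less_top[of q] by (rule order_le_less_trans)
    then show ?thesis by (intro emeasure_eq_ennreal_measure) simp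
  qed
  have eA: "emeasure lborel A = ennreal (measure lborel A)" using fin AQ unfolding Q_def by auto
  have eD: "emeasure lborel D = ennreal (measure lborel D)" using fin DQ unfolding Q_def by auto
  have eB: "emeasure lborel B = ennreal (measure lborel B)" using fin unfolding B_def by auto
  have q: "q > 0" using r by (simp add: q_def)
  have key0: "emeasure lborel A * emeasure lborel D \<le> ennreal (real K ^ (CARD('n) + 1)) * GG A D (r / real K)
     + of_nat (K - 1) * (2 ^ CARD('n) * emeasure lborel B * emeasure lborel Q)"
    using key[OF assms(1,2) AQ DQ disj r K1] unfolding B_def Q_def .
  define Z where "Z = (Kr - 1) * 2^CARD('n) * measure lborel B * q"
  have Z0: "Z \<ge> 0" using Kr K1 KKr q unfolding Z_def by (auto intro!: mult_nonneg_nonneg)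
  have Zeq: "of_nat (K - 1) * (2 ^ CARD('n) * emeasure lborel B * emeasure lborel Q) = ennreal Z"
  proof -
    have "(of_nat (K - 1) :: ennreal) = ennreal (Kr - 1)" using K1 KKr
      by (metis ennreal_of_nat_eq_real_of_nat of_nat_1 of_nat_diff)
    moreover have "(2 ^ CARD('n) :: ennreal) = ennreal (2 ^ CARD('n))" by (subst ennreal_power[symmetric]) auto
    ultimately show ?thesis unfolding Z_def eB eQ using Kr K1 KKr
      by (simp add: ennreal_mult'[symmetric] mult.assoc)
  qed
  have sq: "ennreal (sig^2 * q^2) \<le> emeasure lborel A * emeasure lborel D"
  proof -
    have "(sig * q) * (sig * q) \<le> measure lborel A * measure lborel D"
      using mA mD sig q unfolding q_def by (intro mult_mono) auto
    then have "sig^2 * q^2 \<le> measure lborel A * measure lborel D" by (simp add: power2_eq_square mult_ac)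
    then have "ennreal (sig^2 * q^2) \<le> ennreal (measure lborel A * measure lborel D)" by (rule ennreal_leI)
    then show ?thesis unfolding eA eD by (simp add: ennreal_mult)
  qed
  have key1: "emeasure lborel A * emeasure lborel D \<le> ennreal (Kr ^ (CARD('n) + 1)) * GG A D (r / Kr) + ennreal Z"
    using key0 unfolding KKr Zeq .
  have h1: "ennreal (sig^2 * q^2) \<le> ennreal (Kr ^ (CARD('n) + 1)) * GG A D (r / Kr) + ennreal Z"
    by (rule order_trans[OF sq key1])
  have Zle: "Z \<le> sig^2 * q^2 / 2"
  proof -
    have "Z = ((2^j - 1) * 2^CARD('n) * measure lborel B) * q" by (simp add: Z_def Kr_def)
    also have "\<dots> \<le> (sig^2 * q / 2) * q" using cond q unfolding B_def Q_def q_def by (intro mult_right_mono) auto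
    finally show ?thesis by (simp add: power2_eq_square)
  qed
  have h2: "ennreal (sig^2 * q^2 / 2) \<le> ennreal (Kr ^ (CARD('n) + 1)) * GG A D (r / Kr)"
    using ennreal_half_cancel[OF h1 Zle Z0] .
  have "ennreal cj * GG A D (r / Kr) = ennreal (cj / Kr ^ (CARD('n) + 1)) * (ennreal (Kr ^ (CARD('n) + 1)) * GG A D (r / Kr))"
  proof -
    have "ennreal (cj / Kr ^ (CARD('n) + 1)) * ennreal (Kr ^ (CARD('n) + 1)) = ennreal cj"
      using Kr by (simp add: ennreal_mult'[symmetric] cj_def)
    then show ?thesis by (simp add: mult.assoc[symmetric])
  qed
  also have "\<dots> \<ge> ennreal (cj / Kr ^ (CARD('n) + 1)) * ennreal (sig^2 * q^2 / 2)"
    using h2 by (intro mult_left_mono) auto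
  finally have "ennreal (cj / Kr ^ (CARD('n) + 1) * (sig^2 * q^2 / 2)) \<le> ennreal cj * GG A D (r / Kr)"
    using Kr by (simp add: ennreal_mult'[symmetric] cj_def)
  note F1 = this
  have F2: "cj / Kr ^ (CARD('n) + 1) * (sig^2 * q^2 / 2) = (1/4) * sqrt (real CARD('n)) powr (-(real CARD('n) + 2 * s)) * sig^2 * r powr (real CARD('n) - 2 * s) * Kr powr (2 * s - 1)"
    unfolding cj_def q_def Kr_def using real_ident[OF r, of "2^j" "CARD('n)" s sig] by simp
  from F1 have "ennreal ((1/4) * sqrt (real CARD('n)) powr (-(real CARD('n) + 2 * s)) * sig^2 * r powr (real CARD('n) - 2 * s) * Kr powr (2 * s - 1)) \<le> ennreal cj * GG A D (r / Kr)"
    unfolding F2 .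
  then show ?thesis unfolding cj_def Kr_def .
qed

lemma multi_bound:
  fixes A D :: "(real^'n) set" and a :: "real^'n" and s sig r :: real and J :: nat
  assumes [measurable]: "A \<in> sets borel" "D \<in> sets borel"
    and AQ: "A \<subseteq> cbox a (a + r *\<^sub>R One)" and DQ: "D \<subseteq> cbox a (a + r *\<^sub>R One)"
    and disj: "A \<inter> D = {}" and r: "r > 0" and s: "s \<ge> 1/2"
    and mA: "measure lborel A \<ge> sig * r^CARD('n)" and mD: "measure lborel D \<ge> sig * r^CARD('n)" and sig: "sig > 0"
    and cond: "\<And>j. j \<le> J \<Longrightarrow> (2^j - 1) * 2^CARD('n) * measure lborel (cbox a (a + r *\<^sub>R One) - (A \<union> D)) \<le> sig^2 * r^CARD('n) / 2"
  shows "ennreal (\<Sum>j\<le>J. (1/4) * sqrt (real CARD('n)) powr (-(real CARD('n) + 2 * s)) * sig^2 * r powr (real CARD('n) - 2 * s) * (2^j) powr (2 * s - 1))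
     \<le> (\<integral>\<^sup>+x. \<integral>\<^sup>+y. indicator A x * indicator D y * ennreal (1 / norm (x - y) powr (real CARD('n) + 2 * s)) \<partial>lborel \<partial>lborel)"
proof -
  define p where "p = real CARD('n) + 2 * s"
  define c where "c j = (1/2) * sqrt (real CARD('n)) powr (-p) * (2^j/r) powr p" for j :: nat
  define \<phi> where "\<phi> w = (\<Sum>j\<le>J. ennreal (c j) * indicator (bx (r/2^j)) w)" for w :: "real^'n"
  have p: "p \<ge> 1" using s by (simp add: p_def)
  have [measurable]: "\<phi> \<in> borel_measurable borel" unfolding \<phi>_def by measurable
  have phi: "\<phi> w \<le> ennreal (1 / norm w powr p)" if "w \<noteq> 0" for w
  proof -
    have "\<phi> w = (\<Sum>j\<le>J. ennreal (c j * indicator (bx (r/2^j)) w))"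
      unfolding \<phi>_def by (intro sum.cong refl) (simp add: indicator_def)
    also have "\<dots> = ennreal (\<Sum>j\<le>J. c j * indicator (bx (r/2^j)) w)"
      by (rule sum_ennreal) (simp add: c_def)
    also have "\<dots> \<le> ennreal (1 / norm w powr p)"
      using kernel_pw_real[OF that r p, of J] by (intro ennreal_leI) (simp add: c_def mult.assoc)
    finally show ?thesis .
  qed
  have "(\<integral>\<^sup>+w. \<phi> w * FF A D w \<partial>lborel) = (\<integral>\<^sup>+w. (\<Sum>j\<le>J. ennreal (c j) * (indicator (bx (r/2^j)) w * FF A D w)) \<partial>lborel)"
    unfolding \<phi>_def by (intro nn_integral_cong) (simp only: sum_distrib_right mult.assoc)
  also have "\<dots> = (\<Sum>j\<le>J. ennreal (c j) * GG A D (r/2^j))"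
    unfolding GG_def by (subst nn_integral_sum) (measurable, simp add: nn_integral_cmult)
  finally have eq: "(\<integral>\<^sup>+w. \<phi> w * FF A D w \<partial>lborel) = (\<Sum>j\<le>J. ennreal (c j) * GG A D (r/2^j))" .
  have "ennreal (\<Sum>j\<le>J. (1/4) * sqrt (real CARD('n)) powr (-(real CARD('n) + 2 * s)) * sig^2 * r powr (real CARD('n) - 2 * s) * (2^j) powr (2 * s - 1))
      = (\<Sum>j\<le>J. ennreal ((1/4) * sqrt (real CARD('n)) powr (-(real CARD('n) + 2 * s)) * sig^2 * r powr (real CARD('n) - 2 * s) * (2^j) powr (2 * s - 1)))"
    using r by (subst sum_ennreal[symmetric]) auto
  also have "\<dots> \<le> (\<Sum>j\<le>J. ennreal (c j) * GG A D (r/2^j))"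
  proof (intro sum_mono)
    fix j assume "j \<in> {..J}"
    then show "ennreal ((1/4) * sqrt (real CARD('n)) powr (-(real CARD('n) + 2 * s)) * sig^2 * r powr (real CARD('n) - 2 * s) * (2^j) powr (2 * s - 1))
       \<le> ennreal (c j) * GG A D (r/2^j)"
      unfolding c_def p_def using term_bound[OF assms(1,2) AQ DQ disj r mA mD sig cond] by simp
  qed
  also have "\<dots> = (\<integral>\<^sup>+w. \<phi> w * FF A D w \<partial>lborel)" using eq by simp
  also have "\<dots> \<le> (\<integral>\<^sup>+x. \<integral>\<^sup>+y. indicator A x * indicator D y * ennreal (1 / norm (x - y) powr p) \<partial>lborel \<partial>lborel)"
    using phi disj by (intro kernel_lower) auto
  finally show ?thesis by (simp add: p_def)
qed

definition dlt :: "real \<Rightarrow> real \<Rightarrow> nat \<Rightarrow> real" where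
  "dlt s sig n = (if s = 1/2
     then ((1/4) * sqrt (real n) powr (-(real n + 2 * s)) * sig^2) / (ln 2 + \<bar>ln (2^(n+1) / sig^2)\<bar>)
     else ((1/4) * sqrt (real n) powr (-(real n + 2 * s)) * sig^2) * (sig^2 / 2^(n+2)) powr (2 * s - 1))"

lemma dlt_pos: "sig > 0 \<Longrightarrow> n \<ge> 1 \<Longrightarrow> dlt s sig n > 0"
  unfolding dlt_def by (auto intro!: divide_pos_pos add_pos_nonneg)

lemma L_infinite:
  fixes L :: ennreal and E :: real
  assumes E: "E > 0" and h: "\<And>J::nat. ennreal (real (Suc J) * E) \<le> L"
  shows "L = \<infinity>"
proof (rule ccontr)
  assume "L \<noteq> \<infinity>"
  then obtain l where l: "L = ennreal l" "l \<ge> 0" by (cases L) auto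
  obtain J :: nat where J: "l / E < real J" using reals_Archimedean2 by blast
  have "l < real J * E" using J E by (simp add: field_simps)
  also have "\<dots> \<le> real (Suc J) * E" using E by simp
  finally have "l < real (Suc J) * E" .
  moreover have "real (Suc J) * E \<le> l" using h[of J] l E by (simp add: ennreal_le_iff2) (smt (verit) mult_pos_pos of_nat_0_le_iff)
  ultimately show False by simp
qed

lemma final_lborel:
  fixes A D :: "(real^'n) set" and a :: "real^'n" and s sig r :: real
  assumes [measurable]: "A \<in> sets borel" "D \<in> sets borel"
    and AQ: "A \<subseteq> cbox a (a + r *\<^sub>R One)" and DQ: "D \<subseteq> cbox a (a + r *\<^sub>R One)"
    and disj: "A \<inter> D = {}" and r: "r > 0" and s: "s \<ge> 1/2" "s < 1"
    and mA: "measure lborel A \<ge> sig * r^CARD('n)" and mD: "measure lborel D \<ge> sig * r^CARD('n)" and sig: "sig > 0"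
    and b0: "b \<ge> 0"
    and bdef: "b = measure lborel (cbox a (a + r *\<^sub>R One) - (A \<union> D))"
  shows "rhs CARD('n) s (dlt s sig CARD('n)) (r^CARD('n)) b
     \<le> (\<integral>\<^sup>+x. \<integral>\<^sup>+y. indicator A x * indicator D y * ennreal (1 / norm (x - y) powr (real CARD('n) + 2 * s)) \<partial>lborel \<partial>lborel)"
proof -
  define L where "L = (\<integral>\<^sup>+x. \<integral>\<^sup>+y. indicator A x * indicator D y * ennreal (1 / norm (x - y) powr (real CARD('n) + 2 * s)) \<partial>lborel \<partial>lborel)"
  define N where "N = real CARD('n)"
  define q where "q = r^CARD('n)"
  define E' where "E' = (1/4) * sqrt N powr (-(N + 2 * s)) * sig^2"
  define E where "E = E' * r powr (N - 2 * s)"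
  have N1: "N \<ge> 1" by (simp add: N_def)
  have q: "q > 0" using r by (simp add: q_def)
  have E'0: "E' > 0" using sig N1 by (simp add: E'_def)
  have E0: "E > 0" using E'0 r by (simp add: E_def)
  have MB: "ennreal (\<Sum>j\<le>J. E * (2^j) powr (2 * s - 1)) \<le> L"
    if c: "\<And>j. j \<le> J \<Longrightarrow> (2^j - 1) * 2^CARD('n) * b \<le> sig^2 * q / 2" for J
    using multi_bound[OF assms(1,2) AQ DQ disj r s(1) mA mD sig, of J] c
    unfolding L_def E_def E'_def N_def q_def bdef by (simp add: mult.assoc)
  have termge: "E * (2^j) powr (2 * s - 1) \<ge> E" for j :: nat
  proof -
    have "(2::real)^j \<ge> 1" by simp
    then have "(2^j) powr (2 * s - 1) \<ge> (1::real)" using s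
      by (metis ge_one_powr_ge_zero diff_ge_0_iff_ge mult.commute divide_le_eq_numeral1(1) less_eq_real_def)
    then show ?thesis using E0 by simp
  qed
  have sumge: "(\<Sum>j\<le>J. E * (2^j) powr (2 * s - 1)) \<ge> real (Suc J) * E" for J
  proof -
    have "(\<Sum>j\<le>J. E * (2^j) powr (2 * s - 1)) \<ge> (\<Sum>j\<le>J. E)" by (intro sum_mono termge)
    then show ?thesis by simp
  qed
  show ?thesis
  proof (cases "b = 0")
    case True
    have "L = \<infinity>"
    proof (rule L_infinite[OF E0])
      fix J
      have "ennreal (real (Suc J) * E) \<le> ennreal (\<Sum>j\<le>J. E * (2^j) powr (2 * s - 1))"
        using sumge by (intro ennreal_leI) auto
      also have "\<dots> \<le> L" using True sig q by (intro MB) auto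
      finally show "ennreal (real (Suc J) * E) \<le> L" .
    qed
    then show ?thesis unfolding L_def by simp
  next
    case False
    then have b: "b > 0" using b0 by simp
    define X where "X = sig^2 * q / (2^(CARD('n)+1) * b)"
    have X0: "X > 0" using sig q b by (simp add: X_def)
    define J where "J = (if X \<ge> 1 then nat \<lfloor>log 2 X\<rfloor> else 0)"
    have J1: "(2::real)^J \<le> X" if "X \<ge> 1"
    proof -
      have "(2::real)^J = 2 powr (real J)" by (simp add: powr_realpow)
      also have "real J = of_int \<lfloor>log 2 X\<rfloor>" using that by (simp add: J_def)
      also have "2 powr (of_int \<lfloor>log 2 X\<rfloor>) \<le> 2 powr (log 2 X)" by (intro powr_mono) auto
      also have "\<dots> = X" using X0 by simp
      finally show ?thesis .
    qed
    have J3: "log 2 X \<le> real J + 1" if "X \<ge> 1"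
      using that by (simp add: J_def)
    have J2: "X / 2 \<le> 2^J"
    proof (cases "X \<ge> 1")
      case True
      have "X = 2 powr (log 2 X)" using X0 by simp
      also have "\<dots> \<le> 2 powr (real J + 1)" using J3[OF True]
        by (intro powr_mono) auto
      also have "\<dots> = 2 * 2^J" by (simp add: powr_add powr_realpow)
      finally show ?thesis by simp
    next
      case False then show ?thesis by (simp add: J_def)
    qed
    have cond: "(2^j - 1) * 2^CARD('n) * b \<le> sig^2 * q / 2" if "j \<le> J" for j
    proof (cases "X \<ge> 1")
      case True
      have "(2::real)^j \<le> 2^J" using that by (intro power_increasing) auto
      then have "(2::real)^j \<le> X" using J1[OF True] by (rule order_trans)
      then have "(2^j - 1) * 2^CARD('n) * b \<le> X * 2^CARD('n) * b" using b by (intro mult_right_mono) auto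
      also have "\<dots> = sig^2 * q / 2" using b by (simp add: X_def field_simps)
      finally show ?thesis .
    next
      case False then have "j = 0" using that by (simp add: J_def)
      then show ?thesis using sig q by simp
    qed
    have LJ: "ennreal (\<Sum>j\<le>J. E * (2^j) powr (2 * s - 1)) \<le> L" using MB cond by blast
    have qpow: "q powr ((N - 2 * s) / N) = r powr (N - 2 * s)"
    proof -
      have "q = r powr N" using r by (simp add: q_def N_def powr_realpow)
      then show ?thesis using N1 r by (simp add: powr_powr)
    qed
    show ?thesis
    proof (cases "s = 1/2")
      case True
      define C0 where "C0 = ln (2^(CARD('n)+1) / sig^2)"
      have lnq: "ln (q / b) = ln X + C0"
      proof -
        have eq: "q / b = X * (2^(CARD('n)+1) / sig^2)" using sig b by (simp add: X_def field_simps)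
        have Y: "(2::real)^(CARD('n)+1) / sig^2 > 0" using sig by simp
        show ?thesis unfolding eq C0_def using X0 Y sig by (simp only: ln_mult) simp
      qed
      have lnle: "ln (q / b) \<le> (ln 2 + \<bar>C0\<bar>) * real (Suc J)"
      proof (cases "X \<ge> 1")
        case True
        have "ln X = ln 2 * log 2 X" using X0 by (simp add: log_def)
        also have "\<dots> \<le> ln 2 * real (Suc J)" using J3[OF True] by (intro mult_left_mono) auto
        finally have "ln X \<le> ln 2 * real (Suc J)" .
        moreover have "C0 \<le> \<bar>C0\<bar> * real (Suc J)" by (smt (verit) mult_le_cancel_left1 of_nat_0_le_iff of_nat_Suc)
        moreover have "(ln 2 + \<bar>C0\<bar>) * real (Suc J) = ln 2 * real (Suc J) + \<bar>C0\<bar> * real (Suc J)" by (rule distrib_right)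
        ultimately show ?thesis unfolding lnq by linarith
      next
        case False
        then have "ln X < 0" using X0 by simp
        moreover have "C0 \<le> \<bar>C0\<bar> * real (Suc J)" by (smt (verit) mult_le_cancel_left1 of_nat_0_le_iff of_nat_Suc)
        moreover have "0 \<le> ln 2 * real (Suc J)" by simp
        moreover have "(ln 2 + \<bar>C0\<bar>) * real (Suc J) = ln 2 * real (Suc J) + \<bar>C0\<bar> * real (Suc J)" by (rule distrib_right)
        ultimately show ?thesis unfolding lnq by linarith
      qed
      have qpow1: "q powr ((N - 1) / N) = r powr (N - 1)" using qpow True by simp
      have "rhs CARD('n) s (dlt s sig CARD('n)) (r^CARD('n)) b
          = ennreal (E' / (ln 2 + \<bar>C0\<bar>) * r powr (N - 1) * ln (q / b))"
        using False True qpow1 unfolding rhs_def dlt_def E'_def C0_def N_def q_def by simp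
      also have "\<dots> \<le> ennreal (E' * r powr (N - 1) * real (Suc J))"
      proof (intro ennreal_leI)
        have pos: "ln 2 + \<bar>C0\<bar> > 0" using ln_gt_zero[of 2] by (simp add: add_pos_nonneg)
        have "E' / (ln 2 + \<bar>C0\<bar>) * r powr (N - 1) * ln (q / b) = (E' * r powr (N - 1)) * (ln (q / b) / (ln 2 + \<bar>C0\<bar>))"
          by simp
        also have "\<dots> \<le> (E' * r powr (N - 1)) * real (Suc J)"
          using lnle pos E'0 r by (intro mult_left_mono) (auto simp: divide_le_eq mult.commute)
        finally show "E' / (ln 2 + \<bar>C0\<bar>) * r powr (N - 1) * ln (q / b) \<le> E' * r powr (N - 1) * real (Suc J)" .
      qed
      also have "\<dots> = ennreal (\<Sum>j\<le>J. E * (2^j) powr (2 * s - 1))"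
        using True by (simp add: E_def mult.commute)
      also have "\<dots> \<le> L" by (rule LJ)
      finally show ?thesis unfolding L_def .
    next
      case sne: False
      have "rhs CARD('n) s (dlt s sig CARD('n)) (r^CARD('n)) b
          = ennreal (E' * (sig^2 / 2^(CARD('n)+2)) powr (2 * s - 1) * r powr (N - 2 * s) * (q / b) powr (2 * s - 1))"
        using False sne qpow unfolding rhs_def dlt_def E'_def N_def q_def by simp
      also have "\<dots> = ennreal (E * (X / 2) powr (2 * s - 1))"
      proof -
        have "(sig^2 / 2^(CARD('n)+2)) powr (2 * s - 1) * (q / b) powr (2 * s - 1) = (sig^2 / 2^(CARD('n)+2) * (q / b)) powr (2 * s - 1)"
          using sig q b by (intro powr_mult[symmetric])
        also have "sig^2 / 2^(CARD('n)+2) * (q / b) = X / 2" using b by (simp add: X_def field_simps)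
        finally show ?thesis by (simp add: E_def mult_ac)
      qed
      also have "\<dots> \<le> ennreal (E * (2^J) powr (2 * s - 1))"
        using J2 X0 s E0 by (intro ennreal_leI mult_left_mono powr_mono2) auto
      also have "\<dots> \<le> ennreal (\<Sum>j\<le>J. E * (2^j) powr (2 * s - 1))"
        using E0 by (intro ennreal_leI member_le_sum) auto
      also have "\<dots> \<le> L" by (rule LJ)
      finally show ?thesis unfolding L_def .
    qed
  qed
qed

lemma borel_part:
  fixes A :: "(real^'n) set"
  assumes "A \<in> sets lebesgue"
  obtains A' N' where "A' \<in> sets borel" "A' \<subseteq> A" "N' \<in> null_sets lborel" "A - A' \<subseteq> N'"
proof -
  from sets_completionE[OF assms] obtain S N N' where
    "A = S \<union> N" "N \<subseteq> N'" "N' \<in> null_sets lborel" "S \<in> sets lborel" .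
  then show ?thesis using that[of S N'] by auto
qed

theorem proposition4p3:
  fixes s \<sigma> :: real
  assumes "CARD('n::finite) \<ge> 2"
    and "1/2 \<le> s" and "s < 1" and "\<sigma> > 0"
  shows "\<exists>\<delta>>0. \<forall>(Q :: (real ^ 'n) set) A D.
           is_cube Q \<longrightarrow> A \<in> sets lebesgue \<longrightarrow> D \<in> sets lebesgue \<longrightarrow>
           A \<subseteq> Q \<longrightarrow> D \<subseteq> Q \<longrightarrow> A \<inter> D = {} \<longrightarrow>
           min (measure lebesgue A) (measure lebesgue D) \<ge> \<sigma> * measure lebesgue Q \<longrightarrow>
           Lint s A D \<ge> rhs CARD('n) s \<delta> (measure lebesgue Q) (measure lebesgue (Q - (A \<union> D)))"
proof (intro exI[of _ "dlt s \<sigma> CARD('n)"] conjI allI impI)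
  show "dlt s \<sigma> CARD('n) > 0" using assms(4) by (intro dlt_pos) auto
  fix Q :: "(real ^ 'n) set" and A D
  assume cube: "is_cube Q" and Al: "A \<in> sets lebesgue" and Dl: "D \<in> sets lebesgue"
    and AQ: "A \<subseteq> Q" and DQ: "D \<subseteq> Q" and disj: "A \<inter> D = {}"
    and mm: "min (measure lebesgue A) (measure lebesgue D) \<ge> \<sigma> * measure lebesgue Q"
  obtain a r where r: "r > 0" and Qe: "Q = cbox a (a + r *\<^sub>R One)" using cube unfolding is_cube_def by blast
  obtain A' NA where A'[measurable]: "A' \<in> sets borel" and A'A: "A' \<subseteq> A" and NA: "NA \<in> null_sets lborel" and ANA: "A - A' \<subseteq> NA"
    using borel_part[OF Al] by blast
  obtain D' ND where D'[measurable]: "D' \<in> sets borel" and D'D: "D' \<subseteq> D" and ND: "ND \<in> null_sets lborel" and DND: "D - D' \<subseteq> ND"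
    using borel_part[OF Dl] by blast
  have Qb[measurable]: "Q \<in> sets borel" unfolding Qe by simp
  have mQ: "measure lebesgue Q = r^CARD('n)"
  proof -
    have "measure lebesgue Q = measure lborel Q" using Qb by simp
    also have "\<dots> = r^CARD('n)" unfolding measure_def Qe emeasure_cube[OF r] using r by simp
    finally show ?thesis .
  qed
  have mA: "measure lebesgue A = measure lborel A'"
  proof -
    have "A = A' \<union> (A - A')" using A'A by auto
    moreover have "A - A' \<in> null_sets lebesgue" using NA ANA unfolding null_sets_completion_iff2 by auto
    ultimately have "measure lebesgue A = measure lebesgue A'" by (metis measure_Un_null_set sets_completionI_sets sets_lborel A')
    then show ?thesis using A' by simp
  qed
  have mD: "measure lebesgue D = measure lborel D'"
  proof -
    have "D = D' \<union> (D - D')" using D'D by auto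
    moreover have "D - D' \<in> null_sets lebesgue" using ND DND unfolding null_sets_completion_iff2 by auto
    ultimately have "measure lebesgue D = measure lebesgue D'" by (metis measure_Un_null_set sets_completionI_sets sets_lborel D')
    then show ?thesis using D' by simp
  qed
  have mB: "measure lebesgue (Q - (A \<union> D)) = measure lborel (Q - (A' \<union> D'))"
  proof -
    have eq: "Q - (A' \<union> D') = (Q - (A \<union> D)) \<union> ((Q - (A' \<union> D')) \<inter> (NA \<union> ND))"
      using A'A D'D ANA DND by auto
    have Bl: "Q - (A \<union> D) \<in> sets lebesgue" using Al Dl Qb by auto
    have "(Q - (A' \<union> D')) \<inter> (NA \<union> ND) \<in> null_sets lebesgue"
      using NA ND unfolding null_sets_completion_iff2 by (intro bexI[of _ "NA \<union> ND"]) auto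
    then have "measure lebesgue (Q - (A' \<union> D')) = measure lebesgue (Q - (A \<union> D))"
      using eq Bl by (metis measure_Un_null_set)
    moreover have "measure lebesgue (Q - (A' \<union> D')) = measure lborel (Q - (A' \<union> D'))" by simp
    ultimately show ?thesis by simp
  qed
  have L: "Lint s A' D' \<le> Lint s A D"
    unfolding Lint_def using A'A D'D
    by (intro nn_integral_mono mult_right_mono) (auto simp: indicator_def)
  have L': "Lint s A' D' = (\<integral>\<^sup>+x. \<integral>\<^sup>+y. indicator A' x * indicator D' y * ennreal (1 / norm (x - y) powr (real CARD('n) + 2 * s)) \<partial>lborel \<partial>lborel)"
    unfolding Lint_def by (simp only: nn_integral_completion)
  have fin: "rhs CARD('n) s (dlt s \<sigma> CARD('n)) (r^CARD('n)) (measure lborel (Q - (A' \<union> D'))) \<le> Lint s A' D'"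
  proof -
    have mA': "measure lborel A' \<ge> \<sigma> * r^CARD('n)" using mm unfolding mQ mA mD by simp
    have mD': "measure lborel D' \<ge> \<sigma> * r^CARD('n)" using mm unfolding mQ mA mD by simp
    show ?thesis unfolding L' Qe
      by (intro final_lborel[OF A' D' _ _ _ r assms(2,3) mA' mD' assms(4)]) (use A'A D'D AQ DQ disj in \<open>auto simp: Qe\<close>)
  qed
  show "rhs CARD('n) s (dlt s \<sigma> CARD('n)) (measure lebesgue Q) (measure lebesgue (Q - (A \<union> D))) \<le> Lint s A D"
    unfolding mQ mB using fin L by (rule order_trans)
qed

end
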